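(* Let $R\in(0,\pi)$ and let $\Omega_R\subset\mathbb{S}^2$ be the closed spherical cap of geodesic radius $R$ centered at the north pole. Let $$\mathfrak{C}_{\Omega_R}=\{u\colon\overline{\Omega_R}\to [0,\infty) \;:\; u|_{\partial\Omega_R}=0,\ u \text{ piecewise } C^1\}.$$ Then $\inf\{R_1[u]\colon u\in\mathfrak{C}_{\Omega_R}\}=0$. Consequently, $R_1$ has no minimizer in $\mathfrak{C}_{\Omega_R}$.
   Context: On $\mathbb{S}^2$ use spherical coordinates $\Psi(\theta,\phi)=(\sin\theta\cos\phi,\sin\theta\sin\phi,\cos\theta)$, $\theta\in[0,\pi]$, $\phi\in[0,2\pi)$, with round metric $d\theta^2+\sin^2\theta\,d\phi^2$, area element $d\Omega=\sin\theta\,d\theta\,d\phi$, and $|\nabla_{\mathbb{S}^2}u|^2=u_\theta^2+u_\phi^2/\sin^2\theta$. A function $u$ on a domain $\Omega\subset\mathbb{S}^2$ describes the radial graph $\{e^{u(\xi)}\xi:\xi\in\Omega\}$. The (scale-invariant free expansion) resistance functional is $$R_1[u]=\int_{\Omega}\frac{1}{1+|\nabla_{\mathbb{S}^2}u|^2}\,d\Omega.$$ *)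

theory Defs
  imports "HOL-Analysis.Analysis"
begin

definition Psi :: "real \<times> real \<Rightarrow> real^3" where
  "Psi p = vector [sin (fst p) * cos (snd p), sin (fst p) * sin (snd p), cos (fst p)]"

definition sphere2 :: "(real^3) set" where
  "sphere2 = {x. norm x = 1}"

definition cap :: "real \<Rightarrow> (real^3) set" where
  "cap R = {x \<in> sphere2. x $ 3 \<ge> cos R}"

definition cap_boundary :: "real \<Rightarrow> (real^3) set" where
  "cap_boundary R = {x \<in> sphere2. x $ 3 = cos R}"

definition sph_interior :: "(real^3) set \<Rightarrow> (real^3) set" where
  "sph_interior P = {x \<in> P. \<exists>U. open U \<and> x \<in> U \<and> U \<inter> sphere2 \<subseteq> P}"

definition C1_on_set :: "(real^3) set \<Rightarrow> (real^3 \<Rightarrow> real) \<Rightarrow> bool" where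
  "C1_on_set P u \<longleftrightarrow> (\<exists>U g (g' :: real^3 \<Rightarrow> (real^3) \<Rightarrow>\<^sub>L real).
      open U \<and> P \<subseteq> U \<and>
      (\<forall>x\<in>U. (g has_derivative blinfun_apply (g' x)) (at x)) \<and>
      continuous_on U g' \<and> (\<forall>x\<in>P. g x = u x))"

definition piecewise_C1_on :: "(real^3) set \<Rightarrow> (real^3 \<Rightarrow> real) \<Rightarrow> bool" where
  "piecewise_C1_on S u \<longleftrightarrow> continuous_on S u \<and>
     (\<exists>F. finite F \<and> \<Union>F = S \<and>
        (\<forall>P\<in>F. closed P \<and> C1_on_set P u \<and>
           negligible {p \<in> cbox (0, 0) (pi, 2 * pi). Psi p \<in> P - sph_interior P}))"

definition admissible :: "real \<Rightarrow> (real^3 \<Rightarrow> real) set" where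
  "admissible R = {u. piecewise_C1_on (cap R) u \<and> (\<forall>x\<in>cap R. 0 \<le> u x) \<and>
                      (\<forall>x\<in>cap_boundary R. u x = 0)}"

text \<open>The functional R_1 over the cap, written in spherical coordinates:
  |grad u|^2 = u_theta^2 + u_phi^2 / sin^2 theta, area element sin theta dtheta dphi.\<close>
definition R1 :: "real \<Rightarrow> (real^3 \<Rightarrow> real) \<Rightarrow> real" where
  "R1 R u = integral (cbox (0, 0) (R, 2 * pi))
     (\<lambda>p. sin (fst p) /
        (1 + (deriv (\<lambda>t. u (Psi (t, snd p))) (fst p))\<^sup>2
           + (deriv (\<lambda>s. u (Psi (fst p, s))) (snd p))\<^sup>2 / (sin (fst p))\<^sup>2))"

end

theory Submission
  imports Defs
begin


lemma Psi_alt: "Psi p = (sin (fst p) * cos (snd p)) *\<^sub>R axis 1 1 + (sin (fst p) * sin (snd p)) *\<^sub>R axis 2 1 + cos (fst p) *\<^sub>R axis 3 (1::real)"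
  unfolding Psi_def by (simp add: vec_eq_iff forall_3 vector_3 axis_def)

lemma Psi_3 [simp]: "Psi p $ 3 = cos (fst p)"
  unfolding Psi_def by simp

lemma Psi_norm [simp]: "norm (Psi p) = 1"
proof -
  have e: "(Psi p)$1^2 + (Psi p)$2^2 + (Psi p)$3^2 = 1"
  proof -
    have "(Psi p)$1^2 + (Psi p)$2^2 + (Psi p)$3^2
       = (sin (fst p) * cos (snd p))^2 + (sin (fst p) * sin (snd p))^2 + (cos (fst p))^2"
      unfolding Psi_def by simp
    also have "(sin (fst p) * cos (snd p))^2 + (sin (fst p) * sin (snd p))^2 = (sin (fst p))^2 * ((sin (snd p))^2 + (cos (snd p))^2)"
      by (simp only: power_mult_distrib distrib_left add.commute)
    also have "\<dots> = (sin (fst p))^2" by simp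
    finally show ?thesis by simp
  qed
  show ?thesis unfolding norm_vec_def L2_set_def using e
    by (simp add: sum_3)
qed

lemma Psi_sphere [simp]: "Psi p \<in> sphere2" by (simp add: sphere2_def)

lemma continuous_Psi: "continuous_on A Psi"
  unfolding Psi_alt by (intro continuous_intros)

lemma mem_S: "p \<in> cbox (0,0) (a::real,b) \<longleftrightarrow> 0 \<le> fst p \<and> fst p \<le> a \<and> 0 \<le> snd p \<and> snd p \<le> (b::real)"
  by (cases p) (auto simp add: cbox_Pair_eq simp flip: interval_cbox)

lemma Psi_cap:
  assumes "\<bar>fst p\<bar> \<le> R" "R \<le> pi"
  shows "Psi p \<in> cap R"
proof -
  have "cos R \<le> cos \<bar>fst p\<bar>" by (rule cos_monotone_0_pi_le) (use assms in auto)
  then show ?thesis by (simp add: cap_def)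
qed

lemma Psi_dtheta: "((\<lambda>t. Psi (t, s)) has_vector_derivative
   ((cos t * cos s) *\<^sub>R axis 1 1 + (cos t * sin s) *\<^sub>R axis 2 1 + (- sin t) *\<^sub>R axis 3 (1::real))) (at t)"
  unfolding Psi_alt fst_conv snd_conv
  by (auto intro!: derivative_eq_intros)

lemma Psi_dphi: "((\<lambda>s. Psi (t, s)) has_vector_derivative
   ((sin t * (- sin s)) *\<^sub>R axis 1 1 + (sin t * cos s) *\<^sub>R axis 2 1 + 0 *\<^sub>R axis 3 (1::real))) (at s)"
  unfolding Psi_alt fst_conv snd_conv
  by (auto intro!: derivative_eq_intros simp: mult.commute)

lemma local_deriv:
  fixes \<gamma> :: "real \<Rightarrow> real^3"
  assumes int: "\<gamma> t0 \<in> sph_interior P" and C1: "C1_on_set P u"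
    and sph: "\<And>t. \<gamma> t \<in> sphere2" and cont: "continuous_on UNIV \<gamma>"
    and der: "(\<gamma> has_vector_derivative v) (at t0)"
  shows "\<exists>D. ((\<lambda>t. u (\<gamma> t)) has_real_derivative D) (at t0)"
proof -
  obtain U where U: "open U" "\<gamma> t0 \<in> U" "U \<inter> sphere2 \<subseteq> P" "\<gamma> t0 \<in> P"
    using int unfolding sph_interior_def by blast
  obtain V g and g' :: "real^3 \<Rightarrow> (real^3) \<Rightarrow>\<^sub>L real" where
    V: "open V" "P \<subseteq> V" "\<forall>x\<in>V. (g has_derivative blinfun_apply (g' x)) (at x)"
       "\<forall>x\<in>P. g x = u x"
    using C1 unfolding C1_on_set_def by blast
  have gd: "(g has_derivative blinfun_apply (g' (\<gamma> t0))) (at (\<gamma> t0))"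
    using V U by blast
  have "((g \<circ> \<gamma>) has_derivative (blinfun_apply (g' (\<gamma> t0)) \<circ> (\<lambda>h. h *\<^sub>R v))) (at t0)"
    by (rule diff_chain_at[OF der[unfolded has_vector_derivative_def] gd])
  also have "(blinfun_apply (g' (\<gamma> t0)) \<circ> (\<lambda>h. h *\<^sub>R v)) = (*) (blinfun_apply (g' (\<gamma> t0)) v)"
    by (auto simp: fun_eq_iff blinfun.scaleR_right)
  finally have d0: "((\<lambda>t. g (\<gamma> t)) has_derivative (*) (blinfun_apply (g' (\<gamma> t0)) v)) (at t0)"
    by (simp add: o_def)
  have d1: "((\<lambda>t. g (\<gamma> t)) has_real_derivative (blinfun_apply (g' (\<gamma> t0)) v)) (at t0)"
    using d0 by (simp add: has_field_derivative_def)
  have op: "open (\<gamma> -` U)"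
    using cont U(1) by (simp add: continuous_on_open_vimage)
  have t0: "t0 \<in> \<gamma> -` U" using U by simp
  have eq: "g (\<gamma> t) = u (\<gamma> t)" if "t \<in> \<gamma> -` U" for t
  proof -
    have "\<gamma> t \<in> P" using U sph that by blast
    then show ?thesis using V by blast
  qed
  show ?thesis using has_field_derivative_transform_within_open[OF d1 op t0 eq] by blast
qed

lemma dq_limit:
  fixes f :: "real \<Rightarrow> real"
  assumes "(f has_real_derivative D) (at x)" "d \<longlonglongrightarrow> 0" "\<And>n. d n \<noteq> 0"
  shows "(\<lambda>n. (f (x + d n) - f x) / d n) \<longlonglongrightarrow> D"
proof -
  have l: "((\<lambda>h. (f (x + h) - f x) / h) \<longlongrightarrow> D) (at 0)"
    using assms(1) by (simp add: DERIV_def)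
  have "filterlim d (at 0) sequentially"
    using assms(2,3) by (simp add: filterlim_at)
  from filterlim_compose[OF l this] show ?thesis by simp
qed




definition intg :: "(real^3 \<Rightarrow> real) \<Rightarrow> real \<times> real \<Rightarrow> real" where
  "intg u = (\<lambda>p. sin (fst p) /
        (1 + (deriv (\<lambda>t. u (Psi (t, snd p))) (fst p))\<^sup>2
           + (deriv (\<lambda>s. u (Psi (fst p, s))) (snd p))\<^sup>2 / (sin (fst p))\<^sup>2))"

lemma R1_eq: "R1 R u = integral (cbox (0,0) (R, 2*pi)) (intg u)"
  unfolding R1_def intg_def ..

lemma intg_nonneg:
  assumes "0 \<le> fst p" "fst p \<le> pi"
  shows "0 \<le> intg u p" "intg u p \<le> 1"
proof -
  have s: "0 \<le> sin (fst p)" "sin (fst p) \<le> 1" using assms by (auto simp: sin_ge_zero)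
  have den: "1 \<le> 1 + (deriv (\<lambda>t. u (Psi (t, snd p))) (fst p))\<^sup>2
           + (deriv (\<lambda>s. u (Psi (fst p, s))) (snd p))\<^sup>2 / (sin (fst p))\<^sup>2"
    by simp
  show "0 \<le> intg u p" unfolding intg_def using s den by simp
  show "intg u p \<le> 1" unfolding intg_def using s den
    by (smt (verit, best) divide_le_eq_1)
qed

lemma Psi_theta_cont: "continuous_on A (\<lambda>t. Psi (t, s))"
  unfolding Psi_alt by (intro continuous_intros)

lemma Psi_phi_cont: "continuous_on A (\<lambda>s. Psi (t, s))"
  unfolding Psi_alt by (intro continuous_intros)

lemma den_pos [simp]: "(1::real) + x\<^sup>2 + y\<^sup>2 / z\<^sup>2 \<noteq> 0"
proof -
  have "0 \<le> x\<^sup>2 + y\<^sup>2 / z\<^sup>2" by simp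
  then show ?thesis by linarith
qed

lemma main:
  assumes R: "0 < R" "R < pi" and adm: "u \<in> admissible R"
  shows "intg u integrable_on cbox (0,0) (R,2*pi) \<and> 0 < integral (cbox (0,0) (R,2*pi)) (intg u)"
proof -
  define S :: "(real \<times> real) set" where "S = cbox (0,0) (R, 2*pi)"
  have ucont: "continuous_on (cap R) u" and
    "\<exists>F. finite F \<and> \<Union>F = cap R \<and>
        (\<forall>P\<in>F. closed P \<and> C1_on_set P u \<and>
           negligible {p \<in> cbox (0, 0) (pi, 2 * pi). Psi p \<in> P - sph_interior P})"
    using adm unfolding admissible_def piecewise_C1_on_def by auto
  then obtain F where F: "finite F" "\<Union>F = cap R"
    "\<And>P. P\<in>F \<Longrightarrow> C1_on_set P u"
    "\<And>P. P\<in>F \<Longrightarrow> negligible {p \<in> cbox (0, 0) (pi, 2 * pi). Psi p \<in> P - sph_interior P}"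
    by blast
  define Nb where "Nb = {p::real\<times>real. fst p = 0} \<union>
     \<Union>((\<lambda>P. {p \<in> cbox (0, 0) (pi, 2 * pi). Psi p \<in> P - sph_interior P}) ` F)"
  have negNb: "negligible Nb"
  proof -
    have "{p::real\<times>real. fst p = 0} = {p. (1::real,0::real) \<bullet> p = 0}"
      by (auto simp: inner_Pair_0)
    then have "negligible {p::real\<times>real. fst p = 0}"
      using negligible_hyperplane[of "(1::real,0::real)" 0] by (simp add: zero_prod_def)
    moreover have "negligible (\<Union>((\<lambda>P. {p \<in> cbox (0, 0) (pi, 2 * pi). Psi p \<in> P - sph_interior P}) ` F))"
      using F(1,4) by (intro negligible_Union) auto
    ultimately show ?thesis unfolding Nb_def by simp
  qed
  have good: "0 < fst p \<and> fst p \<le> R \<and> (\<exists>P\<in>F. Psi p \<in> sph_interior P)" if p: "p \<in> S - Nb" for p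
  proof -
    have p1: "0 \<le> fst p" "fst p \<le> R" "0 \<le> snd p" "snd p \<le> 2*pi"
      using p by (auto simp: S_def mem_S)
    have "fst p \<noteq> 0" using p unfolding Nb_def by auto
    moreover have "Psi p \<in> cap R" using p1 R by (intro Psi_cap) auto
    then obtain P where P: "P \<in> F" "Psi p \<in> P" using F(2) by auto
    have "p \<in> cbox (0, 0) (pi, 2 * pi)" using p1 R unfolding mem_S by auto
    then have "Psi p \<in> sph_interior P" using p P unfolding Nb_def by blast
    ultimately show ?thesis using p1 P by auto
  qed
  have derivs: "\<exists>D1 D2. ((\<lambda>t. u (Psi (t, snd p))) has_real_derivative D1) (at (fst p)) \<and>
                        ((\<lambda>s. u (Psi (fst p, s))) has_real_derivative D2) (at (snd p))"
    if p: "p \<in> S - Nb" for p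
  proof -
    obtain P where P: "P \<in> F" "Psi p \<in> sph_interior P" using good[OF p] by blast
    have "\<exists>D1. ((\<lambda>t. u (Psi (t, snd p))) has_real_derivative D1) (at (fst p))"
      by (rule local_deriv[where P=P, OF _ F(3)[OF P(1)] Psi_sphere Psi_theta_cont Psi_dtheta])
         (use P in simp)
    moreover have "\<exists>D2. ((\<lambda>s. u (Psi (fst p, s))) has_real_derivative D2) (at (snd p))"
      by (rule local_deriv[where P=P, OF _ F(3)[OF P(1)] Psi_sphere Psi_phi_cont Psi_dphi])
         (use P in simp)
    ultimately show ?thesis by blast
  qed
  define d where "d n = R / real (Suc n)" for n
  have dpos: "0 < d n" for n using R by (simp add: d_def)
  have dlim: "d \<longlonglongrightarrow> 0"
    unfolding d_def using LIMSEQ_Suc[OF lim_const_over_n[of R]] by simp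
  define fn where "fn n p = sin (fst p) / (1 + ((u (Psi (fst p + - d n, snd p)) - u (Psi (fst p, snd p))) / (- d n))\<^sup>2
       + ((u (Psi (fst p, snd p + d n)) - u (Psi (fst p, snd p))) / d n)\<^sup>2 / (sin (fst p))\<^sup>2)" for n p
  define S' where "S' = S \<inter> {p. 0 < fst p}"
  have S'sub: "S' \<subseteq> S" unfolding S'_def by auto
  have Sleb: "S \<in> sets lebesgue" unfolding S_def by (simp add: fmeasurableD)
  have S'leb: "S' \<in> sets lebesgue"
  proof -
    have "open {p::real\<times>real. 0 < fst p}"
      by (intro open_Collect_less continuous_intros)
    then have "{p::real\<times>real. 0 < fst p} \<in> sets lebesgue"
      by (metis borel_open sets_completionI_sets sets_lborel)
    then show ?thesis unfolding S'_def using Sleb by simp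
  qed
  have sinpos: "0 < sin (fst p)" if "p \<in> S'" for p
    using that R by (intro sin_gt_zero) (auto simp: S'_def S_def mem_S)
  have fn_cont: "continuous_on S' (fn n)" for n
  proof -
    have c1: "continuous_on S' (\<lambda>p. u (Psi (fst p + - d n, snd p)))"
    proof (rule continuous_on_compose2[OF ucont])
      show "continuous_on S' (\<lambda>p. Psi (fst p + - d n, snd p))"
        by (intro continuous_on_compose2[OF continuous_Psi[of UNIV]] continuous_intros) auto
      show "(\<lambda>p. Psi (fst p + - d n, snd p)) ` S' \<subseteq> cap R"
      proof clarify
        fix a b assume "(a, b) \<in> S'"
        then have "0 \<le> a" "a \<le> R" by (auto simp: S'_def S_def mem_S)
        moreover have "d n \<le> R" using R by (simp add: d_def field_simps)
        ultimately show "Psi (fst (a,b) + - d n, snd (a,b)) \<in> cap R"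
          using dpos[of n] R by (intro Psi_cap) auto
      qed
    qed
    have c2: "continuous_on S' (\<lambda>p. u (Psi (fst p, snd p + d n)))"
    proof (rule continuous_on_compose2[OF ucont])
      show "continuous_on S' (\<lambda>p. Psi (fst p, snd p + d n))"
        by (intro continuous_on_compose2[OF continuous_Psi[of UNIV]] continuous_intros) auto
      show "(\<lambda>p. Psi (fst p, snd p + d n)) ` S' \<subseteq> cap R"
      proof clarify
        fix a b assume "(a, b) \<in> S'"
        then have "0 \<le> a" "a \<le> R" by (auto simp: S'_def S_def mem_S)
        then show "Psi (fst (a,b), snd (a,b) + d n) \<in> cap R"
          using R by (intro Psi_cap) auto
      qed
    qed
    have c0: "continuous_on S' (\<lambda>p. u (Psi (fst p, snd p)))"
    proof (rule continuous_on_compose2[OF ucont])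
      show "continuous_on S' (\<lambda>p. Psi (fst p, snd p))"
        by (intro continuous_on_compose2[OF continuous_Psi[of UNIV]] continuous_intros) auto
      show "(\<lambda>p. Psi (fst p, snd p)) ` S' \<subseteq> cap R"
      proof clarify
        fix a b assume "(a, b) \<in> S'"
        then have "0 \<le> a" "a \<le> R" by (auto simp: S'_def S_def mem_S)
        then show "Psi (fst (a,b), snd (a,b)) \<in> cap R"
          using R by (intro Psi_cap) auto
      qed
    qed
    show ?thesis unfolding fn_def
      using dpos[of n] sinpos
      by (intro continuous_intros c0 c1 c2) (auto simp del: den_pos simp add: den_pos[simplified] dest: less_imp_neq[symmetric])
  qed
  have fn_meas: "fn n measurable_on S" for n
  proof -
    have "fn n measurable_on S'"
      using fn_cont S'leb
      by (simp add: measurable_on_iff_borel_measurable continuous_imp_measurable_on_sets_lebesgue)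
    moreover have "negligible ((S' - S) \<union> (S - S'))"
    proof (rule negligible_subset[of "{p::real\<times>real. fst p = 0}"])
      show "negligible {p::real\<times>real. fst p = 0}" using negNb negligible_subset unfolding Nb_def by blast
      show "S' - S \<union> (S - S') \<subseteq> {p. fst p = 0}"
        by (auto simp: S'_def S_def mem_S)
    qed
    ultimately show ?thesis by (rule measurable_on_spike_set)
  qed
  have lim: "(\<lambda>n. fn n p) \<longlonglongrightarrow> intg u p" if p: "p \<in> S - Nb" for p
  proof -
    obtain D1 D2 where D1: "((\<lambda>t. u (Psi (t, snd p))) has_real_derivative D1) (at (fst p))"
      and D2: "((\<lambda>s. u (Psi (fst p, s))) has_real_derivative D2) (at (snd p))"
      using derivs[OF p] by blast
    have sp: "0 < sin (fst p)" using good[OF p] R by (intro sin_gt_zero) auto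
    have l1: "(\<lambda>n. (u (Psi (fst p + - d n, snd p)) - u (Psi (fst p, snd p))) / (- d n)) \<longlonglongrightarrow> D1"
      using dq_limit[OF D1, of "\<lambda>n. - d n"] dlim dpos
      by (simp add: tendsto_minus_cancel_left[symmetric]) (metis less_irrefl)
    have l2: "(\<lambda>n. (u (Psi (fst p, snd p + d n)) - u (Psi (fst p, snd p))) / d n) \<longlonglongrightarrow> D2"
      using dq_limit[OF D2, of d] dlim dpos by (metis less_irrefl)
    have "(\<lambda>n. fn n p) \<longlonglongrightarrow> sin (fst p) / (1 + D1\<^sup>2 + D2\<^sup>2 / (sin (fst p))\<^sup>2)"
      unfolding fn_def using sp
      by (intro tendsto_intros l1 l2) auto
    moreover have "intg u p = sin (fst p) / (1 + D1\<^sup>2 + D2\<^sup>2 / (sin (fst p))\<^sup>2)"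
      unfolding intg_def using DERIV_imp_deriv[OF D1] DERIV_imp_deriv[OF D2] by simp
    ultimately show ?thesis by simp
  qed
  have meas: "intg u measurable_on S"
    by (rule measurable_on_limit[OF fn_meas negNb lim])
  have bnd: "0 \<le> intg u p \<and> intg u p \<le> 1" if "p \<in> S" for p
    using that R intg_nonneg[of p u] by (auto simp: S_def mem_S)
  have int: "intg u integrable_on S"
  proof (rule measurable_bounded_by_integrable_imp_integrable[OF _ _ _ Sleb])
    show "intg u \<in> borel_measurable (lebesgue_on S)"
      using meas Sleb by (simp add: measurable_on_iff_borel_measurable)
    show "(\<lambda>_. 1::real) integrable_on S" unfolding S_def by (rule integrable_const)
    show "norm (intg u p) \<le> 1" if "p \<in> S" for p using bnd[OF that] by simp
  qed
  have pos: "0 < intg u p" if p: "p \<in> S - Nb" for p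
  proof -
    have sp: "0 < sin (fst p)" using good[OF p] R by (intro sin_gt_zero) auto
    have h: "0 \<le> (deriv (\<lambda>t. u (Psi (t, snd p))) (fst p))\<^sup>2
           + (deriv (\<lambda>s. u (Psi (fst p, s))) (snd p))\<^sup>2 / (sin (fst p))\<^sup>2" by simp
    show ?thesis unfolding intg_def using sp h
      by (simp add: add.assoc add_pos_nonneg)
  qed
  have ge: "0 \<le> integral S (intg u)"
    using int bnd by (intro integral_nonneg) auto
  have ne: "integral S (intg u) \<noteq> 0"
  proof
    assume z: "integral S (intg u) = 0"
    define G where "G x = (if x \<in> S then intg u x else 0)" for x
    have "(intg u has_integral 0) S" using integrable_integral[OF int] z by simp
    then have "(G has_integral 0) UNIV"
      unfolding G_def by (simp add: has_integral_restrict_UNIV)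
    moreover have G0: "0 \<le> G x" for x using bnd unfolding G_def by auto
    ultimately have Gm: "G \<in> borel_measurable lebesgue" and "integral\<^sup>N lebesgue G = 0"
      using has_integral_iff_nn_integral_lebesgue[of G 0] by auto
    then have "AE x in lebesgue. ennreal (G x) = 0"
      using nn_integral_0_iff_AE[of "\<lambda>x. ennreal (G x)" lebesgue] by auto
    then obtain N where N: "negligible N" "{x. \<not> ennreal (G x) = 0} \<subseteq> N"
      by (auto simp: eventually_ae_filter_negligible)
    have "S - Nb \<subseteq> N"
    proof
      fix p assume p: "p \<in> S - Nb"
      then have "ennreal (G p) \<noteq> 0" using pos[OF p] unfolding G_def by auto
      then show "p \<in> N" using N by auto
    qed
    moreover have "box (0,0) (R, 2*pi) \<subseteq> S" unfolding S_def by (rule box_subset_cbox)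
    ultimately have sub: "box (0,0) (R, 2*pi) \<subseteq> N \<union> Nb" by auto
    have "negligible (N \<union> Nb)" using N negNb by simp
    then have "negligible (box (0::real,0::real) (R, 2*pi))" by (rule negligible_subset[OF _ sub])
    moreover have "(R/2, pi) \<in> box (0::real,0::real) (R, 2*pi)"
      using R pi_gt_zero by (auto simp: mem_box Basis_prod_def)
    then have "box (0::real,0::real) (R, 2*pi) \<noteq> {}" by blast
    ultimately show False using open_not_negligible by blast
  qed
  show ?thesis using int ge ne unfolding S_def by simp
qed




definition uk :: "real \<Rightarrow> real \<Rightarrow> real^3 \<Rightarrow> real" where
  "uk R k x = k * (x $ 3 - cos R)"

lemma uk_adm:
  assumes R: "0 < R" "R < pi" and k: "0 < k"
  shows "uk R k \<in> admissible R"
proof -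
  have cont: "continuous_on A (uk R k)" for A
    unfolding uk_def by (intro continuous_intros)
  have closed: "closed (cap R)"
  proof -
    have "cap R = {x::real^3. norm x = 1} \<inter> {x. cos R \<le> x $ 3}"
      unfolding cap_def sphere2_def by auto
    moreover have "closed {x::real^3. norm x = 1}"
      using closed_sphere[of "0::real^3" 1] by (simp add: sphere_def dist_norm)
    moreover have "closed {x::real^3. cos R \<le> x $ 3}"
      using closed_halfspace_component_ge_cart[where i=3 and a="cos R"] by simp
    ultimately show ?thesis by (metis closed_Int)
  qed
  have bl: "bounded_linear (\<lambda>h::real^3. k * h $ 3)"
    by (rule bounded_linear_compose[OF bounded_linear_mult_right bounded_linear_vec_nth])
  have der: "(uk R k has_derivative (\<lambda>h. k * h $ 3)) (at x)" for x
  proof -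
    have "((\<lambda>x::real^3. k * x $ 3 - k * cos R) has_derivative (\<lambda>h. k * h $ 3 - 0)) (at x)"
      by (intro has_derivative_diff bounded_linear.has_derivative[OF bl] has_derivative_ident has_derivative_const)
    then show ?thesis unfolding uk_def by (simp add: algebra_simps)
  qed
  have C1: "C1_on_set (cap R) (uk R k)"
    unfolding C1_on_set_def
  proof (intro exI conjI)
    show "open (UNIV :: (real^3) set)" by simp
    show "cap R \<subseteq> UNIV" by simp
    show "\<forall>x\<in>UNIV. (uk R k has_derivative blinfun_apply ((\<lambda>_. Blinfun (\<lambda>h. k * h $ 3)) x)) (at x)"
      using der bounded_linear_Blinfun_apply[OF bl] by simp
    show "continuous_on UNIV (\<lambda>_::real^3. Blinfun (\<lambda>h. k * h $ 3))" by simp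
    show "\<forall>x\<in>cap R. uk R k x = uk R k x" by simp
  qed
  have neg: "negligible {p \<in> cbox (0, 0) (pi, 2 * pi). Psi p \<in> cap R - sph_interior (cap R)}"
  proof (rule negligible_subset)
    show "negligible {p::real\<times>real. (1::real,0::real) \<bullet> p = R}"
      using negligible_hyperplane[of "(1::real,0::real)" R] by (simp add: zero_prod_def)
    show "{p \<in> cbox (0, 0) (pi, 2 * pi). Psi p \<in> cap R - sph_interior (cap R)} \<subseteq> {p. (1,0) \<bullet> p = R}"
    proof
      fix p assume p: "p \<in> {p \<in> cbox (0, 0) (pi, 2 * pi). Psi p \<in> cap R - sph_interior (cap R)}"
      obtain a b where pab: "p = (a, b)" by (cases p)
      have ab: "(a, b) \<in> cbox (0, 0) (pi, 2 * pi)" "Psi (a, b) \<in> cap R"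
        "Psi (a, b) \<notin> sph_interior (cap R)" using p pab by auto
      have a: "0 \<le> a" "a \<le> pi" using ab(1) by (auto simp: mem_S)
      have c: "cos R \<le> cos a" using ab(2) by (simp add: cap_def)
      have "\<not> cos R < cos a"
      proof
        assume lt: "cos R < cos a"
        have "open {x::real^3. cos R < x $ 3}"
          using open_halfspace_component_gt_cart[where i=3 and a="cos R"] by simp
        moreover have "Psi (a,b) \<in> {x::real^3. cos R < x $ 3}" using lt by simp
        moreover have "{x::real^3. cos R < x $ 3} \<inter> sphere2 \<subseteq> cap R"
          unfolding cap_def by auto
        ultimately have "Psi (a,b) \<in> sph_interior (cap R)"
          unfolding sph_interior_def mem_Collect_eq using ab(2) by (intro conjI exI[of _ "{x::real^3. cos R < x $ 3}"]) auto
        then show False using ab(3) by simp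
      qed
      then have "cos a = cos R" using c by linarith
      then have "a = R" using a R cos_inj_pi[of a R] by linarith
      then show "p \<in> {p. (1,0) \<bullet> p = R}" using pab by simp
    qed
  qed
  show ?thesis
    unfolding admissible_def piecewise_C1_on_def
  proof (intro CollectI conjI exI[of _ "{cap R}"])
    show "continuous_on (cap R) (uk R k)" by (rule cont)
    show "finite {cap R}" by simp
    show "\<Union>{cap R} = cap R" by simp
    show "\<forall>P\<in>{cap R}. closed P \<and> C1_on_set P (uk R k) \<and>
       negligible {p \<in> cbox (0, 0) (pi, 2 * pi). Psi p \<in> P - sph_interior P}"
      using closed C1 neg by simp
    show "\<forall>x\<in>cap R. 0 \<le> uk R k x" using k by (auto simp: cap_def uk_def)
    show "\<forall>x\<in>cap_boundary R. uk R k x = 0" by (auto simp: cap_boundary_def uk_def)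
  qed
qed

lemma uk_R1:
  assumes R: "0 < R" "R < pi" and k: "0 < k"
  shows "R1 R (uk R k) \<le> measure lborel (cbox (0::real,0::real) (R, 2*pi)) * (1 / (2*k))"
proof -
  define S :: "(real \<times> real) set" where "S = cbox (0,0) (R, 2*pi)"
  have int: "intg (uk R k) integrable_on S"
    using main[OF R uk_adm[OF R k]] unfolding S_def by blast
  have le: "intg (uk R k) p \<le> 1 / (2*k)" if p: "p \<in> S" for p
  proof -
    have d1: "deriv (\<lambda>t. uk R k (Psi (t, snd p))) (fst p) = - k * sin (fst p)"
    proof (rule DERIV_imp_deriv)
      show "((\<lambda>t. uk R k (Psi (t, snd p))) has_real_derivative - k * sin (fst p)) (at (fst p))"
        unfolding uk_def Psi_3 fst_conv
        by (auto intro!: derivative_eq_intros)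
    qed
    have d2: "deriv (\<lambda>s. uk R k (Psi (fst p, s))) (snd p) = 0"
    proof (rule DERIV_imp_deriv)
      show "((\<lambda>s. uk R k (Psi (fst p, s))) has_real_derivative 0) (at (snd p))"
        unfolding uk_def Psi_3 fst_conv
        by (auto intro!: derivative_eq_intros)
    qed
    define s where "s = sin (fst p)"
    have s0: "0 \<le> s" using p R unfolding s_def by (intro sin_ge_zero) (auto simp: S_def mem_S)
    have e: "intg (uk R k) p = s / (1 + (k * s)\<^sup>2)"
      unfolding intg_def d1 d2 s_def by (simp add: power2_eq_square)
    have "0 \<le> (k * s - 1)\<^sup>2" by simp
    then have "2 * k * s \<le> 1 + (k * s)\<^sup>2" by (simp add: power2_eq_square algebra_simps)
    then have "s / (1 + (k * s)\<^sup>2) \<le> 1 / (2 * k)"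
      using k by (simp add: field_simps add_pos_nonneg)
    then show ?thesis using e by simp
  qed
  have "R1 R (uk R k) = integral S (intg (uk R k))" unfolding R1_eq S_def ..
  also have "\<dots> \<le> integral S (\<lambda>_. 1 / (2*k))"
    by (rule integral_le[OF int _ le]) (unfold S_def, rule integrable_const)
  also have "\<dots> = measure lborel S * (1 / (2*k))" by (simp add: S_def)
  finally show ?thesis unfolding S_def .
qed





lemma small:
  assumes R: "0 < R" "R < pi" and e: "0 < e"
  shows "\<exists>v\<in>admissible R. R1 R v < e"
proof -
  define c where "c = measure lborel (cbox (0::real,0::real) (R, 2*pi))"
  have c0: "0 \<le> c" unfolding c_def by simp
  obtain n :: nat where n: "c / e < real n" using reals_Archimedean2 by blast
  define k where "k = real n + 1"
  have k: "0 < k" unfolding k_def by simp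
  have "c < k * e" using n e unfolding k_def by (simp add: field_simps)
  then have "c / k < e" using k by (simp add: field_simps)
  moreover have "c * (1 / (2*k)) \<le> c / k" using c0 k by (simp add: field_simps)
  moreover have "R1 R (uk R k) \<le> c * (1 / (2*k))" using uk_R1[OF R k] unfolding c_def .
  ultimately show ?thesis using uk_adm[OF R k] by force
qed

theorem proposition2p5:
  fixes R :: real
  assumes "0 < R" and "R < pi"
  shows "(INF u \<in> admissible R. R1 R u) = 0 \<and>
         \<not> (\<exists>u \<in> admissible R. \<forall>v \<in> admissible R. R1 R u \<le> R1 R v)"
proof -
  have R: "0 < R" "R < pi" using assms by auto
  have pos: "0 < R1 R u" if "u \<in> admissible R" for u
    using main[OF R that] unfolding R1_eq by blast
  have ne: "admissible R \<noteq> {}" using uk_adm[OF R, of 1] by auto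
  have bdd: "bdd_below ((\<lambda>u. R1 R u) ` admissible R)"
    using pos by (intro bdd_belowI[of _ 0]) (auto intro: less_imp_le)
  have ge: "0 \<le> (INF u \<in> admissible R. R1 R u)"
    using ne pos by (intro cINF_greatest) (auto intro: less_imp_le)
  have le: "(INF u \<in> admissible R. R1 R u) \<le> 0"
  proof (rule ccontr)
    assume "\<not> ?thesis"
    then have p: "0 < (INF u \<in> admissible R. R1 R u)" by simp
    obtain v where v: "v \<in> admissible R" "R1 R v < (INF u \<in> admissible R. R1 R u)"
      using small[OF R p] by blast
    have "(INF u \<in> admissible R. R1 R u) \<le> R1 R v" using bdd v(1) by (rule cINF_lower)
    then show False using v(2) by simp
  qed
  have nomin: "\<not> (\<exists>u \<in> admissible R. \<forall>v \<in> admissible R. R1 R u \<le> R1 R v)"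
  proof
    assume "\<exists>u \<in> admissible R. \<forall>v \<in> admissible R. R1 R u \<le> R1 R v"
    then obtain u where u: "u \<in> admissible R" "\<forall>v \<in> admissible R. R1 R u \<le> R1 R v" by blast
    obtain v where v: "v \<in> admissible R" "R1 R v < R1 R u" using small[OF R pos[OF u(1)]] by blast
    then show False using u(2) by force
  qed
  show ?thesis using ge le nomin by simp
qed


end
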